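(* Let $h\in\mathbb{Z}[t]$ be a monic polynomial of degree $k$ with coefficients in $\{0,1\}$ whose reduction mod $2$ is irreducible over $GF(2)$, so that $GF(2^k)$ is identified with the set of polynomials of degree $<k$ with coefficients in $\{0,1\}$, with arithmetic modulo $2$ and $h$; identify its additive group with $G=\mathbb{Z}_2^k$ via coefficient vectors, and let $\tilde G=\mathbb{R}_2^k$. For $x\in G$, regarded as an integer polynomial, let $\rho(x)\in\mathbb{Z}[t]$ be the remainder of $x^2$ upon division by $h$ in $\mathbb{Z}[t]$ (degree $<k$), and define $f(x)\in\tilde G$ as the coefficient vector of $\rho(x)/2$ with each coefficient taken modulo $2$. Then for all $g_1,g_2,g_3,g_4\in G$ with $g_1+g_2=g_3+g_4$ (in $G$) and $\{g_1,g_2\}\neq\{g_3,g_4\}$, the element $f(g_1)+f(g_2)-f(g_3)-f(g_4)\in\tilde G$ has all coordinates integers (mod $2$) and is nonzero, i.e. lies in $G\setminus\{0\}$.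
   Context: $\mathbb{R}_2$ denotes the additive group of reals modulo $2$, and $G=\mathbb{Z}_2^k\subset\tilde G=\mathbb{R}_2^k$. *)

theory Defs
  imports "HOL-Computational_Algebra.Polynomial" "HOL-Library.Z2" Complex_Main
begin

text \<open>Reduction of reals modulo 2: representative in [0,2). R_2 = reals mod 2.\<close>
definition mod2r :: "real \<Rightarrow> real" where
  "mod2r x = x - 2 * of_int \<lfloor>x / 2\<rfloor>"

definition inG :: "nat \<Rightarrow> int poly \<Rightarrow> bool" where
  "inG k x \<longleftrightarrow> degree x < k \<and> (\<forall>i. coeff x i \<in> {0, 1})"

definition addG :: "int poly \<Rightarrow> int poly \<Rightarrow> nat \<Rightarrow> int" where
  "addG x y i = (coeff x i + coeff y i) mod 2"

text \<open>rho h x: remainder of x^2 upon division by h. For monic h the remainder in Z[t]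
  coincides with the remainder computed in Q[t]; we compute it there.\<close>
definition rho :: "int poly \<Rightarrow> int poly \<Rightarrow> rat poly" where
  "rho h x = map_poly of_int (x ^ 2) mod map_poly of_int h"

definition fmap :: "int poly \<Rightarrow> int poly \<Rightarrow> nat \<Rightarrow> real" where
  "fmap h x i = mod2r (real_of_rat (coeff (rho h x) i) / 2)"

end

theory Submission imports Defs "HOL-Computational_Algebra.Computational_Algebra" "HOL-Computational_Algebra.Field_as_Ring" begin


instantiation bit ::
  "{unique_euclidean_ring, normalization_euclidean_semiring, normalization_semidom_multiplicative}"
begin
definition [simp]: "normalize_bit = (normalize_field :: bit \<Rightarrow> _)"
definition [simp]: "unit_factor_bit = (unit_factor_field :: bit \<Rightarrow> _)"
definition [simp]: "euclidean_size_bit = (euclidean_size_field :: bit \<Rightarrow> _)"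
definition [simp]: "division_segment (x :: bit) = 1"
instance
  by standard
    (simp_all add: dvd_field_iff field_split_simps split: if_splits)
end

instantiation bit :: euclidean_ring_gcd
begin
definition gcd_bit :: "bit \<Rightarrow> bit \<Rightarrow> bit" where
  "gcd_bit = Euclidean_Algorithm.gcd"
definition lcm_bit :: "bit \<Rightarrow> bit \<Rightarrow> bit" where
  "lcm_bit = Euclidean_Algorithm.lcm"
definition Gcd_bit :: "bit set \<Rightarrow> bit" where
 "Gcd_bit = Euclidean_Algorithm.Gcd"
definition Lcm_bit :: "bit set \<Rightarrow> bit" where
 "Lcm_bit = Euclidean_Algorithm.Lcm"
instance by standard (simp_all add: gcd_bit_def lcm_bit_def Gcd_bit_def Lcm_bit_def)
end

instance bit :: field_gcd ..


lemma mpi_add: "map_poly (of_int::int\<Rightarrow>'a::comm_ring_1) (p+q) = map_poly of_int p + map_poly of_int q"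
  by (rule poly_eqI) (simp add: coeff_map_poly)
lemma mpi_diff: "map_poly (of_int::int\<Rightarrow>'a::comm_ring_1) (p-q) = map_poly of_int p - map_poly of_int q"
  by (rule poly_eqI) (simp add: coeff_map_poly)
lemma mpi_smult: "map_poly (of_int::int\<Rightarrow>'a::comm_ring_1) (smult c q) = smult (of_int c) (map_poly of_int q)"
  by (rule poly_eqI) (simp add: coeff_map_poly)
lemma mpi_mult: "map_poly (of_int::int\<Rightarrow>'a::comm_ring_1) (p*q) = map_poly of_int p * map_poly of_int q"
proof (induction p)
  case 0 then show ?case by simp
next
  case (pCons a p)
  then show ?case by (simp add: map_poly_pCons mpi_add mpi_smult)
qed
lemma mpi_num: "map_poly (of_int::int\<Rightarrow>'a::comm_ring_1) (numeral n) = numeral n"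
  by (rule poly_eqI) (simp add: coeff_map_poly numeral_poly coeff_pCons split: nat.split)
lemma mpi_power: "map_poly (of_int::int\<Rightarrow>'a::comm_ring_1) (p^n) = map_poly of_int p ^ n"
  by (induction n) (simp_all add: mpi_mult)

lemma bit_of_int0: "(of_int z :: bit) = 0 \<longleftrightarrow> even z"
proof -
  have "z = 2 * (z div 2) + z mod 2" by simp
  hence "(of_int z :: bit) = of_int (2 * (z div 2)) + of_int (z mod 2)" by (metis of_int_add)
  also have "of_int (2 * (z div 2)) = (0::bit)" by simp
  finally have *: "(of_int z :: bit) = of_int (z mod 2)" by simp
  show ?thesis
  proof (cases "even z")
    case True then show ?thesis using * by simp
  next
    case False then have "z mod 2 = 1" by presburger
    then show ?thesis using * False by simp
  qed
qed

lemma bit_2: "(2::bit poly) = 0"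
  by (simp add: numeral_poly)

lemma mod2r_shift: "mod2r (y + 2 * of_int m) = mod2r y"
proof -
  have "\<lfloor>(y + 2 * of_int m)/2\<rfloor> = \<lfloor>y/2\<rfloor> + m"
    by (metis (no_types, lifting) add_divide_distrib floor_add_int nonzero_mult_div_cancel_left zero_neq_numeral)
  then show ?thesis unfolding mod2r_def by simp
qed

lemma mod2r_ex: "\<exists>m. mod2r y = y + 2 * of_int m"
  unfolding mod2r_def by (rule exI[of _ "- \<lfloor>y/2\<rfloor>"]) simp

lemma mod2r_comb: "mod2r (mod2r x1 + mod2r x2 - mod2r x3 - mod2r x4) = mod2r (x1 + x2 - x3 - x4)"
proof -
  obtain m1 m2 m3 m4 where m: "mod2r x1 = x1 + 2 * of_int m1" "mod2r x2 = x2 + 2 * of_int m2"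
    "mod2r x3 = x3 + 2 * of_int m3" "mod2r x4 = x4 + 2 * of_int m4" using mod2r_ex by metis
  have "mod2r x1 + mod2r x2 - mod2r x3 - mod2r x4 = (x1 + x2 - x3 - x4) + 2 * of_int (m1+m2-m3-m4)"
    using m by simp
  then show ?thesis using mod2r_shift[of "x1+x2-x3-x4" "m1+m2-m3-m4"] by simp
qed

lemma mod2r_int: "mod2r (of_int n) = of_int (n mod 2)"
proof -
  have "\<lfloor>(of_int n :: real)/2\<rfloor> = n div 2"
    by (metis floor_divide_of_int_eq of_int_numeral)
  then show ?thesis unfolding mod2r_def by (simp add: minus_div_mult_eq_mod[symmetric])
qed

lemma int_divmod:
  fixes f h :: "int poly"
  assumes "lead_coeff h = 1" "degree h > 0"
  shows "\<exists>q r. f = h * q + r \<and> degree r < degree h"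
proof -
  have h0: "h \<noteq> 0" using assms by auto
  obtain q r where qr: "pseudo_divmod f h = (q, r)" by (cases "pseudo_divmod f h") auto
  from pseudo_divmod[OF h0 qr] assms have "f = h * q + r" "r = 0 \<or> degree r < degree h" by auto
  moreover have "degree r < degree h" using calculation(2) assms by auto
  ultimately show ?thesis by blast
qed

lemma rho_eq:
  assumes "lead_coeff h = 1" "x^2 = h * q + r" "degree r < degree h"
  shows "rho h x = map_poly of_int r"
proof -
  have "map_poly (of_int::int\<Rightarrow>rat) (x^2) = map_poly of_int r + map_poly of_int q * map_poly of_int h"
    using assms(2) by (simp add: mpi_add mpi_mult mult.commute)
  moreover have "degree (map_poly (of_int::int\<Rightarrow>rat) r) < degree (map_poly (of_int::int\<Rightarrow>rat) h)"
    using assms map_poly_degree_leq[of "of_int::int\<Rightarrow>rat" r] map_poly_degree_eq[of "of_int::int\<Rightarrow>rat" h]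
    by simp
  ultimately show ?thesis unfolding rho_def by (simp add: mod_poly_less)
qed

lemma smult_num: "smult (numeral n) (p :: int poly) = numeral n * p"
  by (simp add: numeral_poly)

abbreviation Bp :: "int poly \<Rightarrow> bit poly" where "Bp \<equiv> map_poly of_int"

lemma Bp_zero_iff: "Bp p = 0 \<longleftrightarrow> (\<forall>i. even (coeff p i))"
  by (simp add: poly_eq_iff coeff_map_poly bit_of_int0)

lemma half_poly: fixes p :: "int poly" assumes "\<forall>i. even (coeff p i)" shows "p = smult 2 (map_poly (\<lambda>z. z div 2) p)"
  using assms by (intro poly_eqI) (simp add: coeff_map_poly)

lemma inG_eq: assumes "inG k a" "inG k c" "Bp (a - c) = 0" shows "a = c"
proof (rule poly_eqI)
  fix i
  have "even (coeff a i - coeff c i)" using assms(3) Bp_zero_iff by (metis coeff_diff)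
  moreover have "coeff a i \<in> {0,1}" "coeff c i \<in> {0,1}" using assms(1,2) unfolding inG_def by auto
  ultimately show "coeff a i = coeff c i" by auto
qed

lemma inG_deg: assumes "inG k a" "inG k c" shows "degree (a - c) < k"
proof -
  have "0 < k" "degree a \<le> k - 1" "degree c \<le> k - 1" using assms unfolding inG_def by auto
  then show ?thesis using degree_diff_le[of a "k-1" c] by linarith
qed

lemma Bp_deg_less: assumes "degree p < k" "Bp h dvd Bp p" "degree (Bp h) = k" shows "Bp p = 0"
proof (rule ccontr)
  assume "Bp p \<noteq> 0"
  then have "k \<le> degree (Bp p)" using dvd_imp_degree_le assms by metis
  moreover have "degree (Bp p) \<le> degree p" by (rule map_poly_degree_leq)
  ultimately show False using assms by linarith
qed

theorem lemma13:
  fixes h g1 g2 g3 g4 :: "int poly" and k :: nat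
  assumes monic: "lead_coeff h = 1"
    and deg: "degree h = k"
    and coeffs01: "\<forall>i. coeff h i \<in> {0, 1}"
    and irred: "irreducible (map_poly (of_int :: int \<Rightarrow> bit) h)"
    and G: "inG k g1" "inG k g2" "inG k g3" "inG k g4"
    and sum_eq: "\<forall>i. addG g1 g2 i = addG g3 g4 i"
    and distinct: "{g1, g2} \<noteq> {g3, g4}"
  shows "(\<forall>i<k. mod2r (fmap h g1 i + fmap h g2 i - fmap h g3 i - fmap h g4 i) \<in> \<int>)
       \<and> (\<exists>i<k. mod2r (fmap h g1 i + fmap h g2 i - fmap h g3 i - fmap h g4 i) \<noteq> 0)"
proof -
  have kpos: "k > 0"
  proof (rule ccontr)
    assume "\<not> k > 0"
    then have "degree h = 0" using deg by simp
    then have "h = [:coeff h 0:]" by (metis degree_0_id)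
    moreover have "coeff h 0 = 1" using monic \<open>degree h = 0\<close> by simp
    ultimately have "h = 1" by (simp add: one_pCons)
    then have "Bp h = 1" by simp
    then show False using irred irreducible_not_unit by fastforce
  qed
  have degB: "degree (Bp h) = k" using deg monic by (simp add: map_poly_degree_eq)
  obtain q1 r1 where qr1: "g1^2 = h*q1 + r1" "degree r1 < k" using int_divmod[OF monic] kpos deg by metis
  obtain q2 r2 where qr2: "g2^2 = h*q2 + r2" "degree r2 < k" using int_divmod[OF monic] kpos deg by metis
  obtain q3 r3 where qr3: "g3^2 = h*q3 + r3" "degree r3 < k" using int_divmod[OF monic] kpos deg by metis
  obtain q4 r4 where qr4: "g4^2 = h*q4 + r4" "degree r4 < k" using int_divmod[OF monic] kpos deg by metis
  have rho1: "rho h g1 = map_poly of_int r1" using rho_eq[OF monic qr1(1)] qr1(2) deg by simp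
  have rho2: "rho h g2 = map_poly of_int r2" using rho_eq[OF monic qr2(1)] qr2(2) deg by simp
  have rho3: "rho h g3 = map_poly of_int r3" using rho_eq[OF monic qr3(1)] qr3(2) deg by simp
  have rho4: "rho h g4 = map_poly of_int r4" using rho_eq[OF monic qr4(1)] qr4(2) deg by simp
  have "\<forall>i. even (coeff (g1 + g2 - g3 - g4) i)"
  proof
    fix i
    have "(coeff g1 i + coeff g2 i) mod 2 = (coeff g3 i + coeff g4 i) mod 2"
      using sum_eq unfolding addG_def by auto
    then have "even (coeff g1 i + coeff g2 i - coeff g3 i - coeff g4 i)" by presburger
    then show "even (coeff (g1 + g2 - g3 - g4) i)" by simp
  qed
  then obtain e where e: "g1 + g2 - g3 - g4 = smult 2 e" using half_poly by blast
  have d: "g4 = g1 + g2 - g3 - smult 2 e" using e by (simp add: algebra_simps)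
  define P where "P = (g1 - g3) * (g3 - g2)"
  define W where "W = e * (g1 + g2 - g3) - e * e"
  have ident: "g1^2 + g2^2 - g3^2 - g4^2 = smult 2 P + smult 4 W"
    unfolding P_def W_def d smult_num by (simp add: algebra_simps power2_eq_square)
  define R where "R = r1 + r2 - r3 - r4"
  define Q where "Q = q1 + q2 - q3 - q4"
  have RQ: "R = smult 2 P + smult 4 W - h * Q"
    using ident qr1(1) qr2(1) qr3(1) qr4(1) unfolding R_def Q_def by (simp add: algebra_simps)
  have Rhigh: "\<forall>i\<ge>k. coeff R i = 0"
    using qr1(2) qr2(2) qr3(2) qr4(2) unfolding R_def by (simp add: coeff_eq_0)
  have BQ: "Bp Q = 0"
  proof (rule ccontr)
    assume nz: "Bp Q \<noteq> 0"
    have Bh0: "Bp h \<noteq> 0" using degB kpos by auto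
    define m where "m = degree (Bp h * Bp Q)"
    have "m \<ge> k" unfolding m_def using degree_mult_eq[OF Bh0 nz] degB by simp
    have "coeff (Bp h * Bp Q) m \<noteq> 0" unfolding m_def using Bh0 nz by simp
    moreover have "Bp R = - (Bp h * Bp Q)"
      unfolding RQ by (simp add: mpi_add mpi_diff mpi_mult mpi_smult)
    moreover have "coeff (Bp R) m = 0" using Rhigh \<open>m \<ge> k\<close> by (simp add: coeff_map_poly)
    ultimately show False by simp
  qed
  then obtain Q' where Q': "Q = smult 2 Q'" using half_poly Bp_zero_iff by blast
  define T where "T = P + smult 2 W - h * Q'"
  have RT: "R = smult 2 T" unfolding RQ T_def Q' smult_num by (simp add: algebra_simps)
  have odd: "\<exists>i<k. odd (coeff T i)"
  proof (rule ccontr)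
    assume "\<not> (\<exists>i<k. odd (coeff T i))"
    then have "\<forall>i. even (coeff T i)"
    proof (intro allI)
      fix i assume A: "\<not> (\<exists>i<k. odd (coeff T i))"
      show "even (coeff T i)"
      proof (cases "i < k")
        case True then show ?thesis using A by blast
      next
        case False
        then have "coeff R i = 0" using Rhigh by simp
        then have "coeff T i = 0" unfolding RT by simp
        then show ?thesis by simp
      qed
    qed
    then have "Bp T = 0" using Bp_zero_iff by blast
    then have "Bp P = Bp h * Bp Q'" unfolding T_def by (simp add: mpi_add mpi_diff mpi_mult mpi_smult)
    then have "Bp h dvd Bp (g1 - g3) * Bp (g3 - g2)" unfolding P_def by (simp add: mpi_mult)
    moreover have "prime_elem (Bp h)" using irred by (simp add: prime_elem_iff_irreducible)
    ultimately have "Bp h dvd Bp (g1 - g3) \<or> Bp h dvd Bp (g3 - g2)" by (simp add: prime_elem_dvd_mult_iff)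
    then show False
    proof
      assume "Bp h dvd Bp (g1 - g3)"
      then have "Bp (g1 - g3) = 0" using Bp_deg_less[OF inG_deg[OF G(1) G(3)] _ degB] by blast
      then have "g1 = g3" using inG_eq[OF G(1) G(3)] by blast
      moreover have "g2 = g4"
      proof (rule inG_eq[OF G(2) G(4)])
        show "Bp (g2 - g4) = 0" unfolding Bp_zero_iff
        proof
          fix i
          have "(coeff g1 i + coeff g2 i) mod 2 = (coeff g1 i + coeff g4 i) mod 2"
            using sum_eq \<open>g1 = g3\<close> unfolding addG_def by auto
          then have "even (coeff g2 i - coeff g4 i)" by presburger
          then show "even (coeff (g2 - g4) i)" by simp
        qed
      qed
      ultimately show False using distinct by simp
    next
      assume "Bp h dvd Bp (g3 - g2)"
      then have "Bp (g3 - g2) = 0" using Bp_deg_less[OF inG_deg[OF G(3) G(2)] _ degB] by blast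
      then have "g3 = g2" using inG_eq[OF G(3) G(2)] by blast
      moreover have "g1 = g4"
      proof (rule inG_eq[OF G(1) G(4)])
        show "Bp (g1 - g4) = 0" unfolding Bp_zero_iff
        proof
          fix i
          have "(coeff g1 i + coeff g2 i) mod 2 = (coeff g2 i + coeff g4 i) mod 2"
            using sum_eq \<open>g3 = g2\<close> unfolding addG_def by auto
          then have "even (coeff g1 i - coeff g4 i)" by presburger
          then show "even (coeff (g1 - g4) i)" by simp
        qed
      qed
      ultimately show False using distinct by (simp add: insert_commute)
    qed
  qed
  have key: "mod2r (fmap h g1 i + fmap h g2 i - fmap h g3 i - fmap h g4 i) = of_int (coeff T i mod 2)" for i
  proof -
    have "mod2r (fmap h g1 i + fmap h g2 i - fmap h g3 i - fmap h g4 i)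
      = mod2r (of_int (coeff r1 i) / 2 + of_int (coeff r2 i) / 2 - of_int (coeff r3 i) / 2 - of_int (coeff r4 i) / 2)"
      unfolding fmap_def rho1 rho2 rho3 rho4 by (simp add: coeff_map_poly mod2r_comb)
    also have "of_int (coeff r1 i) / 2 + of_int (coeff r2 i) / 2 - of_int (coeff r3 i) / 2 - of_int (coeff r4 i) / 2
      = (of_int (coeff R i) / 2 :: real)" unfolding R_def by (simp add: diff_divide_distrib add_divide_distrib)
    also have "\<dots> = of_int (coeff T i)" unfolding RT by simp
    finally show ?thesis by (simp add: mod2r_int)
  qed
  show ?thesis
  proof
    show "\<forall>i<k. mod2r (fmap h g1 i + fmap h g2 i - fmap h g3 i - fmap h g4 i) \<in> \<int>"
      using key by simp
    show "\<exists>i<k. mod2r (fmap h g1 i + fmap h g2 i - fmap h g3 i - fmap h g4 i) \<noteq> 0"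
      using key odd by (metis of_int_0_eq_iff odd_iff_mod_2_eq_one zero_neq_one)
  qed
qed
end
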